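(* Let $S\subseteq T$ be an extension of discrete valuation rings with fraction fields $K\subseteq L$ such that $L/K$ is finite Galois of degree $m$ with Galois group $G$, let $t$ generate the maximal ideal of $T$ with valuation $v_t$, and assume $T=S[\theta]$ for some $\theta\in T$. Enumerate $G=\{\sigma_0,\dots,\sigma_{m-1}\}$ with $\sigma_0=\mathrm{id}_T$ such that $\tau=(\tau_0,\dots,\tau_{m-1}):=(\theta^{\sigma_0},\dots,\theta^{\sigma_{m-1}})$ is minimally ordered, and identify $\prod_{\sigma\in G}T$ with $\prod_{j\in[0,m-1]}T$ via $\sigma_j\leftrightarrow j$. Consider the $T$-linear Dedekind embedding $\delta\colon T\otimes_ST\to\prod_{\sigma\in G}T$, $x\otimes y\mapsto(xy^\sigma)_{\sigma\in G}$ ($T$ acting on the left tensor factor). Then: (i) for $i\in[0,m-1]$ the $(i+1)$st $T$-linear elementary divisor of $\delta$ has valuation $\phi_i:=\sum_{j\in[0,i-1]}v_t(\theta^{\sigma_i}-\theta^{\sigma_j})$; in particular $(\phi_i)_{i\in[0,m-1]}$ depends neither on the choice of $\theta$ nor on the chosen minimal ordering; (ii) the image of $\delta$ equals \[ \Bigl\{(\eta_j)_{j\in[0,m-1]}\in\prod_{j\in[0,m-1]}T\;\Bigm|\;\eta_i-\sum_{j\in[0,i-1]}\eta_jL_{j,i}(\tau)\in t^{\phi_i}T\ \text{for all } i\in[0,m-1]\Bigr\}; \] (iii) the elements $\bigl(\prod_{k\in[0,i-1]}(\theta^{\sigma_j}-\theta^{\sigma_k})\bigr)_{j\in[0,m-1]}$,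 $i\in[0,m-1]$, form a $T$-linear basis of the image of $\delta$.
   Context: $y^\sigma$ denotes the image of $y$ under $\sigma$. A tuple $(\xi_0,\dots,\xi_{m-1})$ of pairwise distinct elements of $T$ is minimally ordered if $\sum_{i\in[0,j-1]}v_t(\xi_j-\xi_i)\le\sum_{i\in[0,j-1]}v_t(\xi_k-\xi_i)$ for all $j\in[0,m-1]$ and $k\in[j+1,m-1]$. For $j<i$, $L_{j,i}(\tau):=\prod_{k\in[0,i-1]\setminus\{j\}}(\tau_i-\tau_k)/\prod_{k\in[0,i-1]\setminus\{j\}}(\tau_j-\tau_k)\in L$. Elementary divisors of an injective $T$-linear map of free rank-$m$ modules: $t^{e_0},\dots,t^{e_{m-1}}$ with $e_0\le\dots\le e_{m-1}$ such that in suitable bases the map is diagonal with these entries; the $(i+1)$st has valuation $e_i$. *)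

theory Defs
  imports Main
begin

definition subfield :: "'a::field set \<Rightarrow> bool" where
  "subfield F \<longleftrightarrow> 0 \<in> F \<and> 1 \<in> F \<and>
     (\<forall>x\<in>F. \<forall>y\<in>F. x + y \<in> F \<and> x * y \<in> F \<and> - x \<in> F) \<and>
     (\<forall>x\<in>F. x \<noteq> 0 \<longrightarrow> inverse x \<in> F)"

definition discrete_valuation :: "'a::field set \<Rightarrow> ('a \<Rightarrow> int) \<Rightarrow> bool" where
  "discrete_valuation F v \<longleftrightarrow>
     (\<forall>x\<in>F. \<forall>y\<in>F. x \<noteq> 0 \<longrightarrow> y \<noteq> 0 \<longrightarrow> v (x * y) = v x + v y) \<and>
     (\<forall>x\<in>F. \<forall>y\<in>F. x \<noteq> 0 \<longrightarrow> y \<noteq> 0 \<longrightarrow> x + y \<noteq> 0 \<longrightarrow> min (v x) (v y) \<le> v (x + y)) \<and>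
     (\<exists>x\<in>F. x \<noteq> 0 \<and> v x = 1)"

definition is_dvr :: "'a::field set \<Rightarrow> 'a set \<Rightarrow> bool" where
  "is_dvr F R \<longleftrightarrow> subfield F \<and>
     (\<exists>v. discrete_valuation F v \<and> R = {x \<in> F. x = 0 \<or> 0 \<le> v x})"

definition field_automorphism :: "('a::field \<Rightarrow> 'a) \<Rightarrow> bool" where
  "field_automorphism \<sigma> \<longleftrightarrow> bij \<sigma> \<and>
     (\<forall>x y. \<sigma> (x + y) = \<sigma> x + \<sigma> y \<and> \<sigma> (x * y) = \<sigma> x * \<sigma> y)"

text \<open>The ambient field (UNIV) is a finite Galois extension of K with Galois group G
  (Artin's formulation: G is a finite group of automorphisms with fixed field K).\<close>
definition galois_with_group :: "('a::field \<Rightarrow> 'a) set \<Rightarrow> 'a set \<Rightarrow> bool" where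
  "galois_with_group G K \<longleftrightarrow> finite G \<and> id \<in> G \<and>
     (\<forall>\<sigma>\<in>G. field_automorphism \<sigma>) \<and> (\<forall>\<sigma>\<in>G. \<forall>\<rho>\<in>G. \<sigma> \<circ> \<rho> \<in> G) \<and>
     {x. \<forall>\<sigma>\<in>G. \<sigma> x = x} = K"

definition units_of_ring :: "'a::field set \<Rightarrow> 'a set" where
  "units_of_ring R = {x \<in> R. \<exists>y\<in>R. x * y = 1}"

text \<open>t-adic valuation of a nonzero element of T.\<close>
definition vt :: "'a::field set \<Rightarrow> 'a \<Rightarrow> 'a \<Rightarrow> nat" where
  "vt T t x = (GREATEST n. \<exists>y\<in>T. x = t ^ n * y)"

definition freemod :: "'a::field set \<Rightarrow> nat \<Rightarrow> (nat \<Rightarrow> 'a) set" where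
  "freemod T m = {\<eta>. (\<forall>j<m. \<eta> j \<in> T) \<and> (\<forall>j\<ge>m. \<eta> j = 0)}"

definition is_basis :: "'a::field set \<Rightarrow> nat \<Rightarrow> (nat \<Rightarrow> 'a) set \<Rightarrow> (nat \<Rightarrow> nat \<Rightarrow> 'a) \<Rightarrow> bool" where
  "is_basis T m M b \<longleftrightarrow> (\<forall>i<m. b i \<in> M) \<and>
     (\<forall>\<eta>\<in>M. \<exists>!a. (\<forall>i<m. a i \<in> T) \<and> (\<forall>i\<ge>m. a i = 0) \<and>
                  \<eta> = (\<lambda>j. \<Sum>i<m. a i * b i j))"

text \<open>e_0 \<le> ... \<le> e_{m-1} are the valuations of the elementary divisors of the
  inclusion of the (free, rank m) submodule M into T^m: there is a basis b of T^m such
  that t^{e_i} b_i form a basis of M.\<close>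
definition elem_div_vals :: "'a::field set \<Rightarrow> 'a \<Rightarrow> nat \<Rightarrow> (nat \<Rightarrow> 'a) set \<Rightarrow> (nat \<Rightarrow> nat) \<Rightarrow> bool" where
  "elem_div_vals T t m M e \<longleftrightarrow> (\<forall>i j. i \<le> j \<longrightarrow> j < m \<longrightarrow> e i \<le> e j) \<and>
     (\<exists>b. is_basis T m (freemod T m) b \<and> is_basis T m M (\<lambda>i j. t ^ e i * b i j))"

text \<open>Image of the Dedekind embedding T \<otimes>_S T \<rightarrow> \<Prod>_j T, x \<otimes> y \<mapsto> (x \<sigma>_j(y))_j;
  every element of T \<otimes>_S T is a finite sum of pure tensors.\<close>
definition dedekind_image :: "'a::field set \<Rightarrow> nat \<Rightarrow> (nat \<Rightarrow> 'a \<Rightarrow> 'a) \<Rightarrow> (nat \<Rightarrow> 'a) set" where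
  "dedekind_image T m \<sigma> = {\<eta>. \<exists>(n::nat) (x::nat \<Rightarrow> 'a) (y::nat \<Rightarrow> 'a). (\<forall>k<n. x k \<in> T \<and> y k \<in> T) \<and>
      (\<forall>j<m. \<eta> j = (\<Sum>k<n. x k * \<sigma> j (y k))) \<and> (\<forall>j\<ge>m. \<eta> j = 0)}"

definition minimally_ordered :: "'a::field set \<Rightarrow> 'a \<Rightarrow> nat \<Rightarrow> (nat \<Rightarrow> 'a) \<Rightarrow> bool" where
  "minimally_ordered T t m \<xi> \<longleftrightarrow> (\<forall>i<m. \<forall>j<m. i \<noteq> j \<longrightarrow> \<xi> i \<noteq> \<xi> j) \<and>
     (\<forall>j<m. \<forall>k. j < k \<and> k < m \<longrightarrow>
        (\<Sum>i<j. vt T t (\<xi> j - \<xi> i)) \<le> (\<Sum>i<j. vt T t (\<xi> k - \<xi> i)))"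

definition lagrange_coeff :: "(nat \<Rightarrow> 'a::field) \<Rightarrow> nat \<Rightarrow> nat \<Rightarrow> 'a" where
  "lagrange_coeff \<tau> j i = (\<Prod>k\<in>{..<i} - {j}. \<tau> i - \<tau> k) / (\<Prod>k\<in>{..<i} - {j}. \<tau> j - \<tau> k)"

end

theory Submission
  imports Defs "Jordan_Normal_Form.Determinant" "HOL-Computational_Algebra.Polynomial"
begin

locale dvr =
  fixes T :: "'a::field set" and t :: 'a and v :: "'a \<Rightarrow> int"
  assumes vmult: "\<And>x y. x \<noteq> 0 \<Longrightarrow> y \<noteq> 0 \<Longrightarrow> v (x * y) = v x + v y"
    and ultra: "\<And>x y. x \<noteq> 0 \<Longrightarrow> y \<noteq> 0 \<Longrightarrow> x + y \<noteq> 0 \<Longrightarrow> min (v x) (v y) \<le> v (x + y)"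
    and T_eq: "T = {x. x = 0 \<or> 0 \<le> v x}"
    and t_nz: "t \<noteq> 0" and vt1: "v t = 1"
begin

lemma v1[simp]: "v 1 = 0"
  using vmult[of 1 1] by simp

lemma v_inv: "x \<noteq> 0 \<Longrightarrow> v (inverse x) = - v x"
  using vmult[of x "inverse x"] by simp

lemma v_neg1: "v (-1) = 0"
  using vmult[of "-1" "-1"] by simp

lemma v_neg[simp]: "v (- x) = v x"
proof (cases "x = 0")
  case False
  then show ?thesis using vmult[of "-1" x] v_neg1 by simp
qed simp

lemma v_div: "x \<noteq> 0 \<Longrightarrow> y \<noteq> 0 \<Longrightarrow> v (x / y) = v x - v y"
  using vmult[of x "inverse y"] v_inv[of y] by (simp add: divide_inverse)

lemma T_0[simp]: "0 \<in> T" and T_1[simp]: "1 \<in> T" and t_T[simp]: "t \<in> T"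
  using vt1 by (auto simp: T_eq)

lemma T_mult[intro]: "x \<in> T \<Longrightarrow> y \<in> T \<Longrightarrow> x * y \<in> T"
  by (cases "x = 0"; cases "y = 0") (auto simp: T_eq vmult)

lemma T_add[intro]: "x \<in> T \<Longrightarrow> y \<in> T \<Longrightarrow> x + y \<in> T"
proof -
  assume a: "x \<in> T" "y \<in> T"
  show ?thesis
  proof (cases "x = 0 \<or> y = 0 \<or> x + y = 0")
    case True then show ?thesis using a by auto
  next
    case False
    then have "min (v x) (v y) \<le> v (x + y)" using ultra by auto
    then show ?thesis using a False by (auto simp: T_eq)
  qed
qed

lemma T_uminus[intro]: "x \<in> T \<Longrightarrow> - x \<in> T"
  by (auto simp: T_eq)

lemma T_diff[intro]: "x \<in> T \<Longrightarrow> y \<in> T \<Longrightarrow> x - y \<in> T"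
  using T_add[of x "-y"] T_uminus[of y] by simp

lemma T_sum[intro]: "(\<And>i. i \<in> A \<Longrightarrow> f i \<in> T) \<Longrightarrow> sum f A \<in> T"
  by (induction A rule: infinite_finite_induct) auto

lemma T_prod[intro]: "(\<And>i. i \<in> A \<Longrightarrow> f i \<in> T) \<Longrightarrow> prod f A \<in> T"
  by (induction A rule: infinite_finite_induct) auto

lemma T_pow[intro]: "x \<in> T \<Longrightarrow> x ^ n \<in> T"
  by (induction n) auto

lemma v_pow: "x \<noteq> 0 \<Longrightarrow> v (x ^ n) = int n * v x"
  by (induction n) (auto simp: vmult algebra_simps)

lemma v_tpow[simp]: "v (t ^ n) = int n"
  using v_pow[OF t_nz] vt1 by simp

lemma v_prod: "finite A \<Longrightarrow> (\<And>i. i \<in> A \<Longrightarrow> f i \<noteq> 0) \<Longrightarrow> v (prod f A) = (\<Sum>i\<in>A. v (f i))"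
  by (induction A rule: finite_induct) (auto simp: vmult)

lemma divisible_iff: "(\<exists>y\<in>T. x = t ^ n * y) \<longleftrightarrow> x = 0 \<or> int n \<le> v x"
proof
  assume "\<exists>y\<in>T. x = t ^ n * y"
  then obtain y where y: "y \<in> T" "x = t ^ n * y" by auto
  show "x = 0 \<or> int n \<le> v x"
  proof (cases "y = 0")
    case False
    then have "v x = int n + v y" using y t_nz by (simp add: vmult)
    then show ?thesis using y False by (auto simp: T_eq)
  qed (use y in auto)
next
  assume a: "x = 0 \<or> int n \<le> v x"
  show "\<exists>y\<in>T. x = t ^ n * y"
  proof (cases "x = 0")
    case False
    have "v (x / t ^ n) = v x - int n" using False t_nz by (simp add: v_div)
    then have "x / t ^ n \<in> T" using a False by (auto simp: T_eq)
    then show ?thesis using t_nz by (intro bexI[of _ "x / t ^ n"]) auto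
  qed auto
qed

lemma vt_eq: "x \<noteq> 0 \<Longrightarrow> x \<in> T \<Longrightarrow> vt T t x = nat (v x)"
  unfolding vt_def
proof (rule Greatest_equality)
  assume "x \<noteq> 0" "x \<in> T"
  then have "0 \<le> v x" by (auto simp: T_eq)
  then show "\<exists>y\<in>T. x = t ^ nat (v x) * y" by (subst divisible_iff) auto
next
  fix n assume "x \<noteq> 0" "\<exists>y\<in>T. x = t ^ n * y"
  then show "n \<le> nat (v x)" by (subst (asm) divisible_iff) auto
qed

lemma unit_inv: "x \<noteq> 0 \<Longrightarrow> v x = 0 \<Longrightarrow> inverse x \<in> T"
  by (auto simp: T_eq v_inv)

end


lemma tri_unique:
  fixes c :: "nat \<Rightarrow> nat \<Rightarrow> 'a::field"
  assumes diag: "\<And>i. i < m \<Longrightarrow> c i i \<noteq> 0"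
    and low: "\<And>i j. j < i \<Longrightarrow> c i j = 0"
    and z: "\<And>j. j < m \<Longrightarrow> (\<Sum>i<m. a i * c i j) = 0"
  shows "i < m \<Longrightarrow> a i = 0"
proof (induction i rule: less_induct)
  case (less i)
  have "(\<Sum>i'<m. a i' * c i' i) = a i * c i i + (\<Sum>i'\<in>{..<m} - {i}. a i' * c i' i)"
    using less.prems by (simp add: sum.remove)
  also have "(\<Sum>i'\<in>{..<m} - {i}. a i' * c i' i) = 0"
  proof (intro sum.neutral ballI)
    fix i' assume "i' \<in> {..<m} - {i}"
    then show "a i' * c i' i = 0"
      using less.IH[of i'] low[of i i'] by (cases "i' < i") auto
  qed
  finally show ?case using z[OF less.prems] diag[OF less.prems] by simp
qed

lemma tri_exist:
  fixes c :: "nat \<Rightarrow> nat \<Rightarrow> 'a::field"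
  assumes diag: "\<And>i. i < m \<Longrightarrow> c i i \<noteq> 0"
    and low: "\<And>i j. j < i \<Longrightarrow> c i j = 0"
  shows "\<exists>a. (\<forall>i\<ge>m. a i = 0) \<and> (\<forall>j<m. \<eta> j = (\<Sum>i<m. a i * c i j)) \<and>
             (\<forall>i<m. a i * c i i = \<eta> i - (\<Sum>l<i. a l * c l i))"
proof -
  have "n \<le> m \<Longrightarrow> \<exists>a. (\<forall>i\<ge>n. a i = 0) \<and> (\<forall>j<n. \<eta> j = (\<Sum>i<n. a i * c i j)) \<and>
             (\<forall>i<n. a i * c i i = \<eta> i - (\<Sum>l<i. a l * c l i))" for n
  proof (induction n)
    case 0 then show ?case by (intro exI[of _ "\<lambda>_. 0"]) auto
  next
    case (Suc n)
    then obtain a where a: "\<forall>i\<ge>n. a i = 0" "\<forall>j<n. \<eta> j = (\<Sum>i<n. a i * c i j)"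
      "\<forall>i<n. a i * c i i = \<eta> i - (\<Sum>l<i. a l * c l i)" by auto
    define x where "x = (\<eta> n - (\<Sum>l<n. a l * c l n)) / c n n"
    define a' where "a' = a(n := x)"
    have cn: "c n n \<noteq> 0" using diag Suc.prems by auto
    have s1: "(\<Sum>l<i. a' l * c l j) = (\<Sum>l<i. a l * c l j)" if "i \<le> n" for i j
      using that unfolding a'_def by (intro sum.cong) auto
    have "\<forall>i\<ge>Suc n. a' i = 0" using a(1) by (auto simp: a'_def)
    moreover have "\<forall>j<Suc n. \<eta> j = (\<Sum>i<Suc n. a' i * c i j)"
    proof (intro allI impI)
      fix j assume j: "j < Suc n"
      have eq: "(\<Sum>i<Suc n. a' i * c i j) = (\<Sum>i<n. a i * c i j) + x * c n j"
        using s1[of n j] by (simp add: a'_def)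
      then show "\<eta> j = (\<Sum>i<Suc n. a' i * c i j)"
      proof (cases "j < n")
        case True then show ?thesis using a(2) low[of j n] eq by simp
      next
        case False
        then have "j = n" using j by simp
        then show ?thesis using eq cn by (simp add: x_def)
      qed
    qed
    moreover have "\<forall>i<Suc n. a' i * c i i = \<eta> i - (\<Sum>l<i. a' l * c l i)"
    proof (intro allI impI)
      fix i assume i: "i < Suc n"
      show "a' i * c i i = \<eta> i - (\<Sum>l<i. a' l * c l i)"
      proof (cases "i < n")
        case True then show ?thesis using a(3) s1[of i i] by (simp add: a'_def)
      next
        case False then have "i = n" using i by simp
        then show ?thesis using s1[of n n] cn by (simp add: a'_def x_def)
      qed
    qed
    ultimately show ?case by blast
  qed
  from this[of m] show ?thesis by simp
qed

context dvr
begin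

lemma tri_T:
  fixes c :: "nat \<Rightarrow> nat \<Rightarrow> 'a"
  assumes unit: "\<And>i. i < m \<Longrightarrow> c i i \<noteq> 0 \<and> v (c i i) = 0"
    and cT: "\<And>i j. i < m \<Longrightarrow> j < m \<Longrightarrow> c i j \<in> T"
    and \<eta>T: "\<And>j. j < m \<Longrightarrow> \<eta> j \<in> T"
    and rec: "\<forall>i<m. a i * c i i = \<eta> i - (\<Sum>l<i. a l * c l i)"
  shows "i < m \<Longrightarrow> a i \<in> T"
proof (induction i rule: less_induct)
  case (less i)
  have "a i = (\<eta> i - (\<Sum>l<i. a l * c l i)) * inverse (c i i)"
    using rec less.prems unit[OF less.prems] by (auto simp: field_simps)
  also have "\<dots> \<in> T"
    using less unit_inv unit \<eta>T cT by (intro T_mult T_diff T_sum) auto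
  finally show ?case .
qed

end


definition Cm :: "nat \<Rightarrow> (nat \<Rightarrow> nat \<Rightarrow> 'a) \<Rightarrow> 'a mat" where
  "Cm m c = mat m m (\<lambda>(i,j). c i j)"

lemma Cm_carrier[simp]: "Cm m c \<in> carrier_mat m m"
  by (simp add: Cm_def)

lemma sum_delta_mult: fixes m j :: nat shows "(\<Sum>i<m. a i * (if i = j then 1 else 0)) = (if j < m then a j else (0::'a::field))"
proof -
  have "(\<Sum>i<m. a i * (if i = j then 1 else 0)) = (\<Sum>i<m. if j = i then a i else 0)"
    by (rule sum.cong) auto
  also have "\<dots> = (if j \<in> {..<m} then a j else 0)"
    by (subst sum.delta') auto
  finally show ?thesis by simp
qed

context dvr
begin

lemma det_T:
  assumes "\<And>i j. i < m \<Longrightarrow> j < m \<Longrightarrow> A i j \<in> T"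
  shows "det (Cm m A) \<in> T"
proof -
  have "det (Cm m A) = (\<Sum>p\<in>{p. p permutes {0..<m}}. signof p * (\<Prod>i=0..<m. Cm m A $$ (i, p i)))"
    by (rule det_def') simp
  also have "\<dots> \<in> T"
  proof (intro T_sum T_mult T_prod)
    fix p i assume p: "p \<in> {p. p permutes {0..<m}}" and i: "i \<in> {0..<m}"
    then have "p i < m" by (auto dest: permutes_in_image)
    then show "Cm m A $$ (i, p i) \<in> T" using i assms by (simp add: Cm_def)
  next
    fix p :: "nat \<Rightarrow> nat"
    show "signof p \<in> T" by (auto simp: sign_def)
  qed
  finally show ?thesis .
qed

lemma det_rel:
  assumes c: "is_basis T m N c" and c': "\<And>i. i < m \<Longrightarrow> c' i \<in> N"
  shows "\<exists>d\<in>T. det (Cm m c') = d * det (Cm m c)"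
proof -
  have "\<forall>i. \<exists>a. i < m \<longrightarrow> (\<forall>l<m. a l \<in> T) \<and> c' i = (\<lambda>j. \<Sum>l<m. a l * c l j)"
    using c c' unfolding is_basis_def by metis
  then obtain A where A: "\<And>i. i < m \<Longrightarrow> (\<forall>l<m. A i l \<in> T) \<and> c' i = (\<lambda>j. \<Sum>l<m. A i l * c l j)"
    by metis
  have "Cm m c' = Cm m A * Cm m c"
  proof (rule eq_matI)
    fix i j assume "i < dim_row (Cm m A * Cm m c)" "j < dim_col (Cm m A * Cm m c)"
    then have ij: "i < m" "j < m" by (auto simp: Cm_def)
    have "Cm m c' $$ (i, j) = (\<Sum>l<m. A i l * c l j)"
      using A[OF ij(1)] ij by (simp add: Cm_def)
    also have "\<dots> = (Cm m A * Cm m c) $$ (i, j)"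
      using ij by (simp add: Cm_def scalar_prod_def atLeast0LessThan)
    finally show "Cm m c' $$ (i, j) = (Cm m A * Cm m c) $$ (i, j)" .
  qed (auto simp: Cm_def)
  then have "det (Cm m c') = det (Cm m A) * det (Cm m c)"
    by (simp add: det_mult[of _ m])
  moreover have "det (Cm m A) \<in> T" using A by (intro det_T) auto
  ultimately show ?thesis by blast
qed

lemma det_inv:
  assumes c: "is_basis T m N c" and c': "is_basis T m N c'" and nz: "det (Cm m c) \<noteq> 0"
  shows "det (Cm m c') \<noteq> 0 \<and> v (det (Cm m c')) = v (det (Cm m c))"
proof -
  have "\<forall>i<m. c' i \<in> N" "\<forall>i<m. c i \<in> N" using c c' unfolding is_basis_def by blast+
  then obtain d1 d2 where d1: "d1 \<in> T" "det (Cm m c') = d1 * det (Cm m c)"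
    and d2: "d2 \<in> T" "det (Cm m c) = d2 * det (Cm m c')"
    using det_rel[OF c, of c'] det_rel[OF c', of c] by blast
  have nz': "det (Cm m c') \<noteq> 0" using d2(2) nz by (metis mult_zero_right)
  have n1: "d1 \<noteq> 0" using d1(2) nz' by (metis mult_zero_left)
  have n2: "d2 \<noteq> 0" using d2(2) nz by (metis mult_zero_left)
  have e1: "v (det (Cm m c')) = v d1 + v (det (Cm m c))"
    unfolding d1(2) by (rule vmult[OF n1 nz])
  have e2: "v (det (Cm m c)) = v d2 + v (det (Cm m c'))"
    by (subst d2(2)) (rule vmult[OF n2 nz'])
  have "0 \<le> v d1" "0 \<le> v d2" using d1(1) d2(1) n1 n2 by (auto simp: T_eq)
  with e1 e2 have "v (det (Cm m c')) = v (det (Cm m c))" by linarith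
  with nz' show ?thesis by simp
qed

lemma det_scale:
  "det (Cm m (\<lambda>i j. t ^ f i * b i j)) = t ^ (\<Sum>i<m. f i) * det (Cm m b)"
proof -
  have "det (Cm m (\<lambda>i j. t ^ f i * b i j)) =
    (\<Sum>p\<in>{p. p permutes {0..<m}}. signof p * (\<Prod>i=0..<m. Cm m (\<lambda>i j. t ^ f i * b i j) $$ (i, p i)))"
    by (rule det_def') simp
  also have "\<dots> = (\<Sum>p\<in>{p. p permutes {0..<m}}. t ^ (\<Sum>i<m. f i) * (signof p * (\<Prod>i=0..<m. Cm m b $$ (i, p i))))"
  proof (rule sum.cong[OF refl])
    fix p assume p: "p \<in> {p. p permutes {0..<m}}"
    have "(\<Prod>i=0..<m. Cm m (\<lambda>i j. t ^ f i * b i j) $$ (i, p i)) = (\<Prod>i=0..<m. t ^ f i * Cm m b $$ (i, p i))"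
      using p by (intro prod.cong) (auto simp: Cm_def dest: permutes_in_image)
    also have "\<dots> = t ^ (\<Sum>i<m. f i) * (\<Prod>i=0..<m. Cm m b $$ (i, p i))"
      by (simp add: prod.distrib power_sum atLeast0LessThan)
    finally show "signof p * (\<Prod>i=0..<m. Cm m (\<lambda>i j. t ^ f i * b i j) $$ (i, p i)) =
        t ^ (\<Sum>i<m. f i) * (signof p * (\<Prod>i=0..<m. Cm m b $$ (i, p i)))" by simp
  qed
  also have "\<dots> = t ^ (\<Sum>i<m. f i) * det (Cm m b)"
    by (subst det_def'[of _ m]) (auto simp: sum_distrib_left)
  finally show ?thesis .
qed

lemma std_basis: "is_basis T m (freemod T m) (\<lambda>i j. if i = j then 1 else 0)"
  unfolding is_basis_def
proof (intro conjI allI impI ballI)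
  fix i assume "i < m" then show "(\<lambda>j. if i = j then 1 else 0) \<in> freemod T m"
    by (auto simp: freemod_def)
next
  fix \<eta> assume \<eta>: "\<eta> \<in> freemod T m"
  show "\<exists>!a. (\<forall>i<m. a i \<in> T) \<and> (\<forall>i\<ge>m. a i = 0) \<and> \<eta> = (\<lambda>j. \<Sum>i<m. a i * (if i = j then 1 else 0))"
  proof (rule ex1I[of _ \<eta>])
    show "(\<forall>i<m. \<eta> i \<in> T) \<and> (\<forall>i\<ge>m. \<eta> i = 0) \<and> \<eta> = (\<lambda>j. \<Sum>i<m. \<eta> i * (if i = j then 1 else 0))"
    proof -
      have "(\<Sum>i<m. \<eta> i * (if i = j then 1 else 0)) = \<eta> j" for j
      proof -
        have "(\<Sum>i<m. \<eta> i * (if i = j then 1 else 0)) = (\<Sum>i<m. if j = i then \<eta> i else 0)"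
          by (rule sum.cong) auto
        also have "\<dots> = (if j \<in> {..<m} then \<eta> j else 0)"
          by (simp add: sum.delta)
        also have "\<dots> = \<eta> j" using \<eta> by (simp add: freemod_def)
        finally show ?thesis .
      qed
      moreover have "\<forall>i<m. \<eta> i \<in> T" "\<forall>i\<ge>m. \<eta> i = 0" using \<eta> by (simp_all add: freemod_def)
      ultimately show ?thesis by simp
    qed
  next
    fix a assume a: "(\<forall>i<m. a i \<in> T) \<and> (\<forall>i\<ge>m. a i = 0) \<and> \<eta> = (\<lambda>j. \<Sum>i<m. a i * (if i = j then 1 else 0))"
    show "a = \<eta>"
    proof
      fix j show "a j = \<eta> j" using a by (cases "j < m") (auto simp: sum_delta_mult)
    qed
  qed
qed

lemma det_std: "det (Cm m (\<lambda>i j. if i = j then (1::'a) else 0)) = 1"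
proof -
  have "Cm m (\<lambda>i j. if i = j then (1::'a) else 0) = 1\<^sub>m m"
    by (rule eq_matI) (auto simp: Cm_def)
  then show ?thesis by simp
qed

lemma det_free:
  assumes "is_basis T m (freemod T m) b"
  shows "det (Cm m b) \<noteq> 0 \<and> v (det (Cm m b)) = 0"
  using det_inv[OF std_basis assms] det_std by simp

end


lemma card_threshold:
  fixes e :: "nat \<Rightarrow> nat"
  assumes me: "\<forall>i j. i \<le> j \<longrightarrow> j < m \<longrightarrow> e i \<le> e j" and i: "i < m"
  shows "k < e i \<longleftrightarrow> m - i \<le> card {i'. i' < m \<and> k < e i'}"
proof
  assume "k < e i"
  have "{i..<m} \<subseteq> {i'. i' < m \<and> k < e i'}"
  proof
    fix i' assume "i' \<in> {i..<m}"
    then have "e i \<le> e i'" "i' < m" using me by auto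
    then show "i' \<in> {i'. i' < m \<and> k < e i'}" using \<open>k < e i\<close> by simp
  qed
  then have "card {i..<m} \<le> card {i'. i' < m \<and> k < e i'}" by (intro card_mono) auto
  then show "m - i \<le> card {i'. i' < m \<and> k < e i'}" by simp
next
  assume c: "m - i \<le> card {i'. i' < m \<and> k < e i'}"
  show "k < e i"
  proof (rule ccontr)
    assume "\<not> k < e i"
    have "{i'. i' < m \<and> k < e i'} \<subseteq> {Suc i..<m}"
    proof
      fix i' assume "i' \<in> {i'. i' < m \<and> k < e i'}"
      then have i': "i' < m" "k < e i'" by auto
      have "\<not> i' \<le> i"
      proof
        assume "i' \<le> i"
        then have "e i' \<le> e i" using me i by blast
        then show False using i' \<open>\<not> k < e i\<close> by simp
      qed
      then show "i' \<in> {Suc i..<m}" using i' by simp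
    qed
    then have "card {i'. i' < m \<and> k < e i'} \<le> card {Suc i..<m}" by (intro card_mono) auto
    then show False using c i by simp
  qed
qed

lemma min_suc_sum:
  fixes e :: "nat \<Rightarrow> nat"
  shows "(\<Sum>i<m. min (e i) (Suc k)) = (\<Sum>i<m. min (e i) k) + card {i. i < m \<and> k < e i}"
proof -
  have "(\<Sum>i<m. min (e i) (Suc k)) = (\<Sum>i<m. min (e i) k + (if k < e i then 1 else 0))"
    by (rule sum.cong) auto
  also have "\<dots> = (\<Sum>i<m. min (e i) k) + (\<Sum>i<m. if k < e i then 1 else 0)"
    by (simp add: sum.distrib)
  also have "(\<Sum>i<m. if k < e i then 1 else 0) = card {i. i < m \<and> k < e i}"
    by (simp add: sum.If_cases lessThan_def Collect_conj_eq[symmetric])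
  finally show ?thesis .
qed

lemma sorted_eq_from_minsums:
  fixes e f :: "nat \<Rightarrow> nat"
  assumes me: "\<forall>i j. i \<le> j \<longrightarrow> j < m \<longrightarrow> e i \<le> e j"
    and mf: "\<forall>i j. i \<le> j \<longrightarrow> j < m \<longrightarrow> f i \<le> f j"
    and eq: "\<And>k. (\<Sum>i<m. min (e i) k) = (\<Sum>i<m. min (f i) k)"
  shows "i < m \<Longrightarrow> e i = f i"
proof -
  assume i: "i < m"
  have c: "card {i. i < m \<and> k < e i} = card {i. i < m \<and> k < f i}" for k
    using min_suc_sum[where e=e and m=m and k=k] min_suc_sum[where e=f and m=m and k=k] eq[of k] eq[of "Suc k"] by simp
  have "k < e i \<longleftrightarrow> k < f i" for k
    using card_threshold[OF me i, of k] card_threshold[OF mf i, of k] c[of k] by simp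
  then show "e i = f i" by (meson less_irrefl nat_neq_iff)
qed

lemma ex1_eq: "\<exists>!a. P a \<Longrightarrow> P x \<Longrightarrow> P y \<Longrightarrow> x = y"
  by blast

context dvr
begin

lemma basis_freemod_elem:
  assumes "is_basis T m (freemod T m) b" "i < m"
  shows "\<And>j. j < m \<Longrightarrow> b i j \<in> T" "\<And>j. j \<ge> m \<Longrightarrow> b i j = 0"
  using assms unfolding is_basis_def freemod_def by auto

lemma scaled_unique:
  assumes b: "is_basis T m (freemod T m) b"
    and d: "\<forall>i<m. d i \<in> T" "\<forall>i\<ge>m. d i = 0" and d': "\<forall>i<m. d' i \<in> T" "\<forall>i\<ge>m. d' i = 0"
    and eq: "(\<lambda>j. \<Sum>i<m. d i * (t ^ f i * b i j)) = (\<lambda>j. \<Sum>i<m. d' i * (t ^ f i * b i j))"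
  shows "d = d'"
proof -
  define w where "w = (\<lambda>j. \<Sum>i<m. (d i * t ^ f i) * b i j)"
  have w: "w \<in> freemod T m"
    unfolding w_def freemod_def using basis_freemod_elem[OF b] d by (auto intro!: T_sum T_mult T_pow)
  have e1: "w = (\<lambda>j. \<Sum>i<m. (d i * t ^ f i) * b i j)" by (simp add: w_def)
  have e2: "w = (\<lambda>j. \<Sum>i<m. (d' i * t ^ f i) * b i j)"
    using eq unfolding w_def by (simp add: mult.assoc)
  let ?P = "\<lambda>a. (\<forall>i<m. a i \<in> T) \<and> (\<forall>i\<ge>m. a i = 0) \<and> w = (\<lambda>j. \<Sum>i<m. a i * b i j)"
  have ex: "\<exists>!a. ?P a"
    using b w unfolding is_basis_def by blast
  have P1: "?P (\<lambda>i. d i * t ^ f i)"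
    using d by (intro conjI e1) (auto intro!: T_mult T_pow)
  have P2: "?P (\<lambda>i. d' i * t ^ f i)"
    using d' by (intro conjI e2) (auto intro!: T_mult T_pow)
  have "(\<lambda>i. d i * t ^ f i) = (\<lambda>i. d' i * t ^ f i)"
    by (rule ex1_eq[of ?P, OF ex P1 P2])
  then have "d i * t ^ f i = d' i * t ^ f i" for i by meson
  then show ?thesis using t_nz by auto
qed

lemma sum_basis:
  assumes b: "is_basis T m (freemod T m) b" and M: "is_basis T m M (\<lambda>i j. t ^ e i * b i j)"
    and M0: "(\<lambda>_. 0) \<in> M"
  shows "is_basis T m {\<lambda>j. x j + t ^ k * y j | x y. x \<in> M \<and> y \<in> freemod T m} (\<lambda>i j. t ^ min (e i) k * b i j)"
  unfolding is_basis_def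
proof (intro conjI allI impI ballI)
  fix i assume i: "i < m"
  show "(\<lambda>j. t ^ min (e i) k * b i j) \<in> {\<lambda>j. x j + t ^ k * y j | x y. x \<in> M \<and> y \<in> freemod T m}"
  proof (cases "e i \<le> k")
    case True
    have "(\<lambda>j. t ^ e i * b i j) \<in> M" using M i unfolding is_basis_def by blast
    moreover have "(\<lambda>_. 0) \<in> freemod T m" by (simp add: freemod_def)
    ultimately show ?thesis using True
      by (intro CollectI exI[of _ "\<lambda>j. t ^ e i * b i j"] exI[of _ "\<lambda>_. 0"]) (auto simp: min_def)
  next
    case False
    have "b i \<in> freemod T m" using b i unfolding is_basis_def by blast
    then show ?thesis using False M0
      by (intro CollectI exI[of _ "\<lambda>_. 0"] exI[of _ "b i"]) (auto simp: min_def)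
  qed
next
  fix \<eta> assume "\<eta> \<in> {\<lambda>j. x j + t ^ k * y j | x y. x \<in> M \<and> y \<in> freemod T m}"
  then obtain x y where xy: "\<eta> = (\<lambda>j. x j + t ^ k * y j)" "x \<in> M" "y \<in> freemod T m" by blast
  obtain a where a: "\<forall>i<m. a i \<in> T" "\<forall>i\<ge>m. a i = 0" "x = (\<lambda>j. \<Sum>i<m. a i * (t ^ e i * b i j))"
    using M xy(2) unfolding is_basis_def by metis
  obtain c where c: "\<forall>i<m. c i \<in> T" "\<forall>i\<ge>m. c i = 0" "y = (\<lambda>j. \<Sum>i<m. c i * b i j)"
    using b xy(3) unfolding is_basis_def by metis
  define d where "d i = (if i < m then a i * t ^ (e i - min (e i) k) + t ^ (k - min (e i) k) * c i else 0)" for i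
  have dT: "\<forall>i<m. d i \<in> T" "\<forall>i\<ge>m. d i = 0" using a c by (auto simp: d_def intro!: T_add T_mult T_pow)
  have "\<eta> = (\<lambda>j. \<Sum>i<m. d i * (t ^ min (e i) k * b i j))"
  proof
    fix j
    have "\<eta> j = (\<Sum>i<m. a i * (t ^ e i * b i j)) + (\<Sum>i<m. t ^ k * (c i * b i j))"
      using xy(1) a(3) c(3) by (simp add: sum_distrib_left)
    also have "\<dots> = (\<Sum>i<m. d i * (t ^ min (e i) k * b i j))"
      unfolding sum.distrib[symmetric]
    proof (rule sum.cong[OF refl])
      fix i assume "i \<in> {..<m}"
      have p1: "t ^ e i = t ^ (e i - min (e i) k) * t ^ min (e i) k"
        by (simp add: power_add[symmetric])
      have p2: "t ^ k = t ^ (k - min (e i) k) * t ^ min (e i) k"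
        by (simp add: power_add[symmetric])
      show "a i * (t ^ e i * b i j) + t ^ k * (c i * b i j) = d i * (t ^ min (e i) k * b i j)"
        using \<open>i \<in> {..<m}\<close> unfolding d_def by (subst p1, subst p2) (simp add: algebra_simps)
    qed
    finally show "\<eta> j = (\<Sum>i<m. d i * (t ^ min (e i) k * b i j))" .
  qed
  then show "\<exists>!a. (\<forall>i<m. a i \<in> T) \<and> (\<forall>i\<ge>m. a i = 0) \<and> \<eta> = (\<lambda>j. \<Sum>i<m. a i * (t ^ min (e i) k * b i j))"
    using dT scaled_unique[OF b] by (intro ex1I[of _ d]) auto
qed

lemma elem_div_unique:
  assumes e: "elem_div_vals T t m M e" and f: "elem_div_vals T t m M f" and M0: "(\<lambda>_. 0) \<in> M"
  shows "\<forall>i<m. e i = f i"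
proof -
  obtain b where b: "is_basis T m (freemod T m) b" "is_basis T m M (\<lambda>i j. t ^ e i * b i j)"
    using e unfolding elem_div_vals_def by blast
  obtain b' where b': "is_basis T m (freemod T m) b'" "is_basis T m M (\<lambda>i j. t ^ f i * b' i j)"
    using f unfolding elem_div_vals_def by blast
  have "(\<Sum>i<m. min (e i) k) = (\<Sum>i<m. min (f i) k)" for k
  proof -
    let ?N = "{\<lambda>j. x j + t ^ k * y j | x y. x \<in> M \<and> y \<in> freemod T m}"
    have B1: "is_basis T m ?N (\<lambda>i j. t ^ min (e i) k * b i j)" by (rule sum_basis[OF b M0])
    have B2: "is_basis T m ?N (\<lambda>i j. t ^ min (f i) k * b' i j)" by (rule sum_basis[OF b' M0])
    have d1: "det (Cm m (\<lambda>i j. t ^ min (e i) k * b i j)) = t ^ (\<Sum>i<m. min (e i) k) * det (Cm m b)"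
      by (rule det_scale)
    have d2: "det (Cm m (\<lambda>i j. t ^ min (f i) k * b' i j)) = t ^ (\<Sum>i<m. min (f i) k) * det (Cm m b')"
      by (rule det_scale)
    have nb: "det (Cm m b) \<noteq> 0" "v (det (Cm m b)) = 0" using det_free[OF b(1)] by auto
    have nb': "det (Cm m b') \<noteq> 0" "v (det (Cm m b')) = 0" using det_free[OF b'(1)] by auto
    have tn: "t ^ n \<noteq> 0" for n using t_nz by simp
    have "det (Cm m (\<lambda>i j. t ^ min (e i) k * b i j)) \<noteq> 0" unfolding d1 using nb tn by simp
    from det_inv[OF B1 B2 this]
    have "v (det (Cm m (\<lambda>i j. t ^ min (f i) k * b' i j))) = v (det (Cm m (\<lambda>i j. t ^ min (e i) k * b i j)))"
      by simp
    then have "int (\<Sum>i<m. min (f i) k) = int (\<Sum>i<m. min (e i) k)"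
      unfolding d1 d2 using nb nb' tn by (simp add: vmult del: of_nat_sum)
    then show ?thesis by linarith
  qed
  then show ?thesis
    using sorted_eq_from_minsums[of m e f] e f unfolding elem_div_vals_def by blast
qed

end


lemma lagrange_poly:
  fixes \<tau> :: "nat \<Rightarrow> 'a::field" and p :: "'a poly"
  assumes inj: "inj_on \<tau> {..<i}" and deg: "degree p < i"
  shows "(\<Sum>j<i. poly p (\<tau> j) * lagrange_coeff \<tau> j i) = poly p (\<tau> i)"
proof -
  define D where "D j = (\<Prod>k\<in>{..<i} - {j}. \<tau> j - \<tau> k)" for j
  define q where "q = (\<Sum>j<i. smult (poly p (\<tau> j) / D j) (\<Prod>k\<in>{..<i} - {j}. [:- \<tau> k, 1:]))"
  have pq: "poly q x = (\<Sum>j<i. poly p (\<tau> j) * ((\<Prod>k\<in>{..<i} - {j}. x - \<tau> k) / D j))" for x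
    unfolding q_def by (simp add: poly_sum poly_prod)
  have Dnz: "j < i \<Longrightarrow> D j \<noteq> 0" for j
    unfolding D_def using inj by (auto simp: inj_on_def)
  have degq: "degree q < i"
  proof -
    have "degree q \<le> i - 1"
      unfolding q_def
    proof (intro degree_sum_le)
      fix j assume j: "j \<in> {..<i}"
      have "degree (\<Prod>k\<in>{..<i} - {j}. [:- \<tau> k, 1:]) \<le> (\<Sum>k\<in>{..<i} - {j}. degree [:- \<tau> k, 1:])"
        using degree_prod_sum_le[of "{..<i} - {j}" "\<lambda>k. [:- \<tau> k, 1:]"] by (simp add: o_def)
      also have "\<dots> = i - 1" using j by simp
      finally show "degree (smult (poly p (\<tau> j) / D j) (\<Prod>k\<in>{..<i} - {j}. [:- \<tau> k, 1:])) \<le> i - 1"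
        using degree_smult_le le_trans by blast
    qed simp
    then show ?thesis using deg by linarith
  qed
  have "q = p"
  proof (rule poly_eqI_degree[of "\<tau> ` {..<i}"])
    fix x assume "x \<in> \<tau> ` {..<i}"
    then obtain j' where j': "j' < i" "x = \<tau> j'" by auto
    have "poly q x = (\<Sum>j<i. if j = j' then poly p (\<tau> j) else 0)"
      unfolding pq
    proof (rule sum.cong[OF refl])
      fix j assume j: "j \<in> {..<i}"
      show "poly p (\<tau> j) * ((\<Prod>k\<in>{..<i} - {j}. x - \<tau> k) / D j) = (if j = j' then poly p (\<tau> j) else 0)"
      proof (cases "j = j'")
        case True then show ?thesis using Dnz j j' by (simp add: D_def)
      next
        case False
        then have "(\<Prod>k\<in>{..<i} - {j}. x - \<tau> k) = 0" using j' by (intro prod_zero) auto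
        then show ?thesis using False by simp
      qed
    qed
    also have "\<dots> = poly p x" using j' by (simp add: sum.delta)
    finally show "poly q x = poly p x" .
  next
    show "degree q < card (\<tau> ` {..<i})" using degq card_image[OF inj] by simp
    show "degree p < card (\<tau> ` {..<i})" using deg card_image[OF inj] by simp
  qed
  then have "poly p (\<tau> i) = poly q (\<tau> i)" by simp
  also have "\<dots> = (\<Sum>j<i. poly p (\<tau> j) * lagrange_coeff \<tau> j i)"
    unfolding pq lagrange_coeff_def D_def by simp
  finally show ?thesis by simp
qed

definition Np :: "(nat \<Rightarrow> 'a::field) \<Rightarrow> nat \<Rightarrow> 'a poly" where
  "Np \<tau> l = (\<Prod>k<l. [:- \<tau> k, 1:])"

lemma poly_Np: "poly (Np \<tau> l) x = (\<Prod>k<l. x - \<tau> k)"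
  by (simp add: Np_def poly_prod)

lemma degree_Np: "degree (Np \<tau> l) \<le> l"
proof -
  have "degree (Np \<tau> l) \<le> (\<Sum>k<l. degree [:- \<tau> k, 1:])"
    unfolding Np_def using degree_prod_sum_le[of "{..<l}" "\<lambda>k. [:- \<tau> k, 1:]"] by (simp add: o_def)
  then show ?thesis by simp
qed

lemma lagrange_Np:
  fixes \<tau> :: "nat \<Rightarrow> 'a::field"
  assumes inj: "inj_on \<tau> {..<i}" and l: "l < i"
  shows "(\<Sum>j<i. (\<Prod>k<l. \<tau> j - \<tau> k) * lagrange_coeff \<tau> j i) = (\<Prod>k<l. \<tau> i - \<tau> k)"
  using lagrange_poly[OF inj, of "Np \<tau> l"] degree_Np[of \<tau> l] l by (simp add: poly_Np)


locale pts = dvr +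
  fixes m :: nat and \<tau> :: "nat \<Rightarrow> 'a::field"
  assumes \<tau>T: "\<And>j. j < m \<Longrightarrow> \<tau> j \<in> T"
    and \<tau>inj: "\<And>i j. i < m \<Longrightarrow> j < m \<Longrightarrow> i \<noteq> j \<Longrightarrow> \<tau> i \<noteq> \<tau> j"
begin

definition \<beta> :: "nat \<Rightarrow> nat \<Rightarrow> 'a" where
  "\<beta> i j = (if j < m then (\<Prod>k<i. \<tau> j - \<tau> k) else 0)"

definition span :: "(nat \<Rightarrow> 'a) set" where
  "span = {\<eta>. \<exists>a. (\<forall>i<m. a i \<in> T) \<and> \<eta> = (\<lambda>j. \<Sum>i<m. a i * \<beta> i j)}"

definition \<phi> :: "nat \<Rightarrow> nat" where
  "\<phi> i = (\<Sum>k<i. vt T t (\<tau> i - \<tau> k))"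

lemma \<beta>_low: "j < i \<Longrightarrow> \<beta> i j = 0"
  unfolding \<beta>_def by (auto intro: prod_zero)

lemma \<beta>_nz: "i \<le> j \<Longrightarrow> j < m \<Longrightarrow> \<beta> i j \<noteq> 0"
  unfolding \<beta>_def using \<tau>inj by auto

lemma \<beta>_T: "i \<le> m \<Longrightarrow> \<beta> i j \<in> T"
  unfolding \<beta>_def using \<tau>T by (auto intro!: T_prod T_diff)

lemma \<beta>_high: "j \<ge> m \<Longrightarrow> \<beta> i j = 0"
  unfolding \<beta>_def by simp

lemma v_\<beta>: "i \<le> j \<Longrightarrow> j < m \<Longrightarrow> v (\<beta> i j) = int (\<Sum>k<i. vt T t (\<tau> j - \<tau> k))"
proof -
  assume ij: "i \<le> j" "j < m"
  have nz: "k < i \<Longrightarrow> \<tau> j - \<tau> k \<noteq> 0" for k using \<tau>inj ij by auto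
  have "v (\<beta> i j) = (\<Sum>k<i. v (\<tau> j - \<tau> k))"
    unfolding \<beta>_def using ij nz v_prod[of "{..<i}" "\<lambda>k. \<tau> j - \<tau> k"] by simp
  also have "\<dots> = (\<Sum>k<i. int (vt T t (\<tau> j - \<tau> k)))"
  proof (rule sum.cong[OF refl])
    fix k assume "k \<in> {..<i}"
    then have k: "k < i" by simp
    have "\<tau> j - \<tau> k \<in> T" using \<tau>T ij k by auto
    then show "v (\<tau> j - \<tau> k) = int (vt T t (\<tau> j - \<tau> k))"
      using vt_eq[OF nz[OF k]] nz[OF k] by (auto simp: T_eq)
  qed
  finally show ?thesis by simp
qed

lemma v_\<beta>_diag: "i < m \<Longrightarrow> v (\<beta> i i) = int (\<phi> i)"
  using v_\<beta>[of i i] by (simp add: \<phi>_def)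

lemma span_basis: "is_basis T m span \<beta>"
  unfolding is_basis_def
proof (intro conjI allI impI ballI)
  fix i assume i: "i < m"
  show "\<beta> i \<in> span" unfolding span_def
  proof (intro CollectI exI[of _ "\<lambda>l. if l = i then 1 else 0"] conjI)
    show "\<beta> i = (\<lambda>j. \<Sum>l<m. (if l = i then 1 else 0) * \<beta> l j)"
    proof
      fix j
      have "(\<Sum>l<m. (if l = i then 1 else 0) * \<beta> l j) = (\<Sum>l<m. if i = l then \<beta> l j else 0)"
        by (rule sum.cong) auto
      also have "\<dots> = \<beta> i j" using i by (subst sum.delta') auto
      finally show "\<beta> i j = (\<Sum>l<m. (if l = i then 1 else 0) * \<beta> l j)" by simp
    qed
  qed auto
next
  fix \<eta> assume "\<eta> \<in> span"
  then obtain a where a: "\<forall>i<m. a i \<in> T" "\<eta> = (\<lambda>j. \<Sum>i<m. a i * \<beta> i j)" unfolding span_def by blast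
  let ?P = "\<lambda>a. (\<forall>i<m. a i \<in> T) \<and> (\<forall>i\<ge>m. a i = 0) \<and> \<eta> = (\<lambda>j. \<Sum>i<m. a i * \<beta> i j)"
  have w1: "\<forall>i<m. (\<lambda>i. if i < m then a i else 0) i \<in> T" using a(1) by simp
  have w2: "\<forall>i\<ge>m. (\<lambda>i. if i < m then a i else 0) i = 0" by simp
  have w3: "\<eta> = (\<lambda>j. \<Sum>i<m. (\<lambda>i. if i < m then a i else 0) i * \<beta> i j)"
    unfolding a(2) by (intro ext sum.cong) auto
  have W: "?P (\<lambda>i. if i < m then a i else 0)"
    using w1 w2 w3 by blast
  have U: "a1 = a2" if "?P a1" "?P a2" for a1 a2
  proof
    fix i
    show "a1 i = a2 i"
    proof (cases "i < m")
      case True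
      have "(\<lambda>i. a1 i - a2 i) i = 0"
      proof (rule tri_unique[where c = \<beta> and m = m])
        show "\<And>i. i < m \<Longrightarrow> \<beta> i i \<noteq> 0" using \<beta>_nz by auto
        show "\<And>i j. j < i \<Longrightarrow> \<beta> i j = 0" by (rule \<beta>_low)
        fix j assume "j < m"
        have "(\<Sum>i<m. a1 i * \<beta> i j) = (\<Sum>i<m. a2 i * \<beta> i j)"
          using that(1)[THEN conjunct2, THEN conjunct2] that(2)[THEN conjunct2, THEN conjunct2]
          by (metis (no_types, lifting))
        then show "(\<Sum>i<m. (a1 i - a2 i) * \<beta> i j) = 0"
          by (simp add: algebra_simps sum_subtractf)
      qed (rule True)
      then show ?thesis by simp
    next
      case False then show ?thesis using that by simp
    qed
  qed
  show "\<exists>!a. ?P a" by (rule ex1I[of ?P, OF W]) (erule U[OF _ W])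
qed

end


context pts
begin

lemma \<beta>_diag_nz: "\<And>i. i < m \<Longrightarrow> \<beta> i i \<noteq> 0" using \<beta>_nz by auto

lemma charac:
  assumes \<eta>: "\<eta> \<in> freemod T m"
  shows "\<eta> \<in> span \<longleftrightarrow> (\<forall>i<m. \<exists>y\<in>T. \<eta> i - (\<Sum>j<i. \<eta> j * lagrange_coeff \<tau> j i) = t ^ \<phi> i * y)"
proof -
  obtain a where a: "\<forall>i\<ge>m. a i = 0" "\<forall>j<m. \<eta> j = (\<Sum>i<m. a i * \<beta> i j)"
    "\<forall>i<m. a i * \<beta> i i = \<eta> i - (\<Sum>l<i. a l * \<beta> l i)"
    using tri_exist[of m \<beta> \<eta>, OF \<beta>_diag_nz \<beta>_low] by blast
  have \<eta>z: "\<And>j. j \<ge> m \<Longrightarrow> \<eta> j = 0" and \<eta>T: "\<And>j. j < m \<Longrightarrow> \<eta> j \<in> T"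
    using \<eta> by (auto simp: freemod_def)
  have A: "\<eta> \<in> span \<longleftrightarrow> (\<forall>i<m. a i \<in> T)"
  proof
    assume "\<eta> \<in> span"
    then obtain a' where a': "\<forall>i<m. a' i \<in> T" "\<eta> = (\<lambda>j. \<Sum>i<m. a' i * \<beta> i j)"
      unfolding span_def by blast
    show "\<forall>i<m. a i \<in> T"
    proof (intro allI impI)
      fix i assume i: "i < m"
      have "(\<lambda>i. a i - a' i) i = 0"
      proof (rule tri_unique[where c = \<beta> and m = m, OF \<beta>_diag_nz \<beta>_low])
        fix j assume j: "j < m"
        have "(\<Sum>i<m. a i * \<beta> i j) = (\<Sum>i<m. a' i * \<beta> i j)"
          using a(2) j a'(2) by metis
        then show "(\<Sum>i<m. (a i - a' i) * \<beta> i j) = 0"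
          by (simp add: algebra_simps sum_subtractf)
      qed (use i in auto)
      then show "a i \<in> T" using a'(1) i by simp
    qed
  next
    assume aT: "\<forall>i<m. a i \<in> T"
    have "\<eta> = (\<lambda>j. \<Sum>i<m. a i * \<beta> i j)"
    proof
      fix j show "\<eta> j = (\<Sum>i<m. a i * \<beta> i j)"
        using a(2) \<eta>z[of j] \<beta>_high[of j] by (cases "j < m") auto
    qed
    then show "\<eta> \<in> span" unfolding span_def using aT by blast
  qed
  have B: "(\<Sum>j<i. \<eta> j * lagrange_coeff \<tau> j i) = (\<Sum>l<i. a l * \<beta> l i)" if i: "i < m" for i
  proof -
    have e1: "\<eta> j = (\<Sum>l<i. a l * \<beta> l j)" if j: "j < i" for j
    proof -
      have "\<eta> j = (\<Sum>l<m. a l * \<beta> l j)" using a(2) j i by simp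
      also have "\<dots> = (\<Sum>l<i. a l * \<beta> l j)"
        using i j \<beta>_low by (intro sum.mono_neutral_right) auto
      finally show ?thesis .
    qed
    have inj: "inj_on \<tau> {..<i}" using \<tau>inj i unfolding inj_on_def by (metis lessThan_iff order.strict_trans)
    have "(\<Sum>j<i. \<eta> j * lagrange_coeff \<tau> j i) = (\<Sum>j<i. \<Sum>l<i. a l * (\<beta> l j * lagrange_coeff \<tau> j i))"
      using e1 by (intro sum.cong) (auto simp: sum_distrib_right mult.assoc)
    also have "\<dots> = (\<Sum>l<i. a l * (\<Sum>j<i. \<beta> l j * lagrange_coeff \<tau> j i))"
      by (subst sum.swap) (simp add: sum_distrib_left)
    also have "\<dots> = (\<Sum>l<i. a l * \<beta> l i)"
    proof (rule sum.cong[OF refl])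
      fix l assume l: "l \<in> {..<i}"
      have "(\<Sum>j<i. \<beta> l j * lagrange_coeff \<tau> j i) = (\<Sum>j<i. (\<Prod>k<l. \<tau> j - \<tau> k) * lagrange_coeff \<tau> j i)"
        using i by (intro sum.cong) (auto simp: \<beta>_def)
      also have "\<dots> = (\<Prod>k<l. \<tau> i - \<tau> k)" using lagrange_Np[OF inj, of l] l by simp
      also have "\<dots> = \<beta> l i" using i by (simp add: \<beta>_def)
      finally show "a l * (\<Sum>j<i. \<beta> l j * lagrange_coeff \<tau> j i) = a l * \<beta> l i" by simp
    qed
    finally show ?thesis .
  qed
  have C: "\<eta> i - (\<Sum>j<i. \<eta> j * lagrange_coeff \<tau> j i) = a i * \<beta> i i" if i: "i < m" for i
    using B[OF i] a(3) i by simp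
  have D: "a i \<in> T \<longleftrightarrow> (\<exists>y\<in>T. a i * \<beta> i i = t ^ \<phi> i * y)" if i: "i < m" for i
  proof -
    have bnz: "\<beta> i i \<noteq> 0" using \<beta>_diag_nz i by simp
    have "(\<exists>y\<in>T. a i * \<beta> i i = t ^ \<phi> i * y) \<longleftrightarrow> a i * \<beta> i i = 0 \<or> int (\<phi> i) \<le> v (a i * \<beta> i i)"
      by (rule divisible_iff)
    also have "\<dots> \<longleftrightarrow> a i \<in> T"
    proof (cases "a i = 0")
      case False
      then have "v (a i * \<beta> i i) = v (a i) + int (\<phi> i)" using bnz v_\<beta>_diag[OF i] by (simp add: vmult)
      then show ?thesis using False bnz by (auto simp: T_eq)
    qed simp
    finally show ?thesis by simp
  qed
  show ?thesis using A C D by simp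
qed

end


context dvr
begin

lemma tri_basis_freemod:
  fixes c :: "nat \<Rightarrow> nat \<Rightarrow> 'a"
  assumes unit: "\<And>i. i < m \<Longrightarrow> c i i \<noteq> 0 \<and> v (c i i) = 0"
    and cT: "\<And>i j. i < m \<Longrightarrow> j < m \<Longrightarrow> c i j \<in> T"
    and high: "\<And>i j. j \<ge> m \<Longrightarrow> c i j = 0"
    and low: "\<And>i j. j < i \<Longrightarrow> c i j = 0"
  shows "is_basis T m (freemod T m) c"
  unfolding is_basis_def
proof (intro conjI allI impI ballI)
  fix i assume "i < m" then show "c i \<in> freemod T m"
    using cT high by (auto simp: freemod_def)
next
  fix \<eta> assume \<eta>: "\<eta> \<in> freemod T m"
  have \<eta>z: "\<And>j. j \<ge> m \<Longrightarrow> \<eta> j = 0" and \<eta>T: "\<And>j. j < m \<Longrightarrow> \<eta> j \<in> T"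
    using \<eta> by (auto simp: freemod_def)
  have diag: "\<And>i. i < m \<Longrightarrow> c i i \<noteq> 0" using unit by blast
  obtain a where a: "\<forall>i\<ge>m. a i = 0" "\<forall>j<m. \<eta> j = (\<Sum>i<m. a i * c i j)"
    "\<forall>i<m. a i * c i i = \<eta> i - (\<Sum>l<i. a l * c l i)"
    using tri_exist[of m c \<eta>, OF diag low] by blast
  have aT: "\<forall>i<m. a i \<in> T" using tri_T[OF unit cT \<eta>T a(3)] by blast
  let ?P = "\<lambda>a. (\<forall>i<m. a i \<in> T) \<and> (\<forall>i\<ge>m. a i = 0) \<and> \<eta> = (\<lambda>j. \<Sum>i<m. a i * c i j)"
  have e: "\<eta> = (\<lambda>j. \<Sum>i<m. a i * c i j)"
  proof
    fix j show "\<eta> j = (\<Sum>i<m. a i * c i j)"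
      using a(2) \<eta>z[of j] high[of j] by (cases "j < m") auto
  qed
  have W: "?P a" using aT a(1) e by blast
  have U: "a1 = a2" if "?P a1" "?P a2" for a1 a2
  proof
    fix i
    show "a1 i = a2 i"
    proof (cases "i < m")
      case True
      have "(\<lambda>i. a1 i - a2 i) i = 0"
      proof (rule tri_unique[where c = c and m = m, OF diag low])
        fix j assume "j < m"
        have "(\<Sum>i<m. a1 i * c i j) = (\<Sum>i<m. a2 i * c i j)"
          using that(1)[THEN conjunct2, THEN conjunct2] that(2)[THEN conjunct2, THEN conjunct2]
          by (metis (no_types, lifting))
        then show "(\<Sum>i<m. (a1 i - a2 i) * c i j) = 0"
          by (simp add: algebra_simps sum_subtractf)
      qed (use True in auto)
      then show ?thesis by simp
    next
      case False then show ?thesis using that by simp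
    qed
  qed
  show "\<exists>!a. ?P a" by (rule ex1I[of ?P, OF W]) (erule U[OF _ W])
qed

end

context pts
begin

definition minord :: bool where
  "minord \<longleftrightarrow> (\<forall>j<m. \<forall>k. j < k \<and> k < m \<longrightarrow>
        (\<Sum>i<j. vt T t (\<tau> j - \<tau> i)) \<le> (\<Sum>i<j. vt T t (\<tau> k - \<tau> i)))"

lemma \<phi>_le: "minord \<Longrightarrow> i \<le> j \<Longrightarrow> j < m \<Longrightarrow> \<phi> i \<le> (\<Sum>k<i. vt T t (\<tau> j - \<tau> k))"
  unfolding minord_def \<phi>_def by (cases "i = j") auto

lemma \<phi>_mono: "minord \<Longrightarrow> \<forall>i j. i \<le> j \<longrightarrow> j < m \<longrightarrow> \<phi> i \<le> \<phi> j"
proof (intro allI impI)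
  fix i j assume mo: minord and ij: "i \<le> j" "j < m"
  have "\<phi> i \<le> (\<Sum>k<i. vt T t (\<tau> j - \<tau> k))" by (rule \<phi>_le[OF mo ij])
  also have "\<dots> \<le> (\<Sum>k<j. vt T t (\<tau> j - \<tau> k))"
    using ij by (intro sum_mono2) auto
  finally show "\<phi> i \<le> \<phi> j" by (simp add: \<phi>_def)
qed

lemma exist_ed:
  assumes mo: minord
  shows "elem_div_vals T t m span \<phi>"
proof -
  define b where "b i j = \<beta> i j / t ^ \<phi> i" for i j
  have tn: "t ^ n \<noteq> 0" for n using t_nz by simp
  have bv: "v (b i j) = v (\<beta> i j) - int (\<phi> i)" if "i \<le> j" "j < m" for i j
    using \<beta>_nz[OF that] tn unfolding b_def by (simp add: v_div)
  have unit: "b i i \<noteq> 0 \<and> v (b i i) = 0" if "i < m" for i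
    using bv[of i i] v_\<beta>_diag[OF that] \<beta>_nz[of i i] that tn unfolding b_def by simp
  have bT: "b i j \<in> T" if "i < m" "j < m" for i j
  proof (cases "j < i")
    case True then show ?thesis by (simp add: b_def \<beta>_low)
  next
    case False
    then have ij: "i \<le> j" by simp
    have "int (\<phi> i) \<le> v (\<beta> i j)" unfolding v_\<beta>[OF ij that(2)] using \<phi>_le[OF mo ij that(2)] by (simp only: of_nat_le_iff)
    then show ?thesis using bv[OF ij that(2)] by (auto simp: T_eq)
  qed
  have high: "b i j = 0" if "j \<ge> m" for i j using that by (simp add: b_def \<beta>_high)
  have low: "b i j = 0" if "j < i" for i j using that by (simp add: b_def \<beta>_low)
  have B: "is_basis T m (freemod T m) b"
    by (rule tri_basis_freemod[OF unit bT high low])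
  have "(\<lambda>i j. t ^ \<phi> i * b i j) = \<beta>" using tn by (auto simp: b_def fun_eq_iff)
  then have "is_basis T m span (\<lambda>i j. t ^ \<phi> i * b i j)" using span_basis by simp
  then show ?thesis unfolding elem_div_vals_def using B \<phi>_mono[OF mo] by blast
qed

end


lemma sum_concat: fixes n1 n2 :: nat shows "(\<Sum>k<n1 + n2. f k) = (\<Sum>k<n1. f k) + (\<Sum>k<n2. f (n1 + k))"
  by (induction n2) (auto simp: add.assoc)

context pts
begin

lemma span_0: "(\<lambda>_. 0) \<in> span"
  unfolding span_def by (intro CollectI exI[of _ "\<lambda>_. 0"]) auto

lemma span_add: "\<eta>1 \<in> span \<Longrightarrow> \<eta>2 \<in> span \<Longrightarrow> (\<lambda>j. \<eta>1 j + \<eta>2 j) \<in> span"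
proof -
  assume h: "\<eta>1 \<in> span" "\<eta>2 \<in> span"
  obtain a1 where a1: "\<forall>i<m. a1 i \<in> T" "\<eta>1 = (\<lambda>j. \<Sum>i<m. a1 i * \<beta> i j)"
    using h(1) unfolding span_def by blast
  obtain a2 where a2: "\<forall>i<m. a2 i \<in> T" "\<eta>2 = (\<lambda>j. \<Sum>i<m. a2 i * \<beta> i j)"
    using h(2) unfolding span_def by blast
  note a = a1 a2
  have "(\<lambda>j. \<eta>1 j + \<eta>2 j) = (\<lambda>j. \<Sum>i<m. (a1 i + a2 i) * \<beta> i j)"
    unfolding a(2) a(4) by (simp add: sum.distrib distrib_right)
  moreover have "\<forall>i<m. a1 i + a2 i \<in> T" using a(1,3) by (auto intro!: T_add)
  ultimately show ?thesis unfolding span_def by (intro CollectI exI[of _ "\<lambda>i. a1 i + a2 i"] conjI)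
qed

lemma span_smult: "\<eta> \<in> span \<Longrightarrow> c \<in> T \<Longrightarrow> (\<lambda>j. c * \<eta> j) \<in> span"
proof -
  assume "\<eta> \<in> span" "c \<in> T"
  then obtain a where a: "\<forall>i<m. a i \<in> T" "\<eta> = (\<lambda>j. \<Sum>i<m. a i * \<beta> i j)" unfolding span_def by blast
  have "(\<lambda>j. c * \<eta> j) = (\<lambda>j. \<Sum>i<m. (c * a i) * \<beta> i j)"
    unfolding a(2) by (simp add: sum_distrib_left mult.assoc)
  moreover have "\<forall>i<m. c * a i \<in> T" using a(1) \<open>c \<in> T\<close> by (auto intro!: T_mult)
  ultimately show ?thesis unfolding span_def by (intro CollectI exI[of _ "\<lambda>i. c * a i"] conjI)
qed

lemma span_sum: fixes n :: nat shows "(\<And>k. k < n \<Longrightarrow> f k \<in> span) \<Longrightarrow> (\<lambda>j. \<Sum>k<n. f k j) \<in> span"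
proof (induction n)
  case 0 then show ?case using span_0 by simp
next
  case (Suc n)
  then show ?case using span_add[of "\<lambda>j. \<Sum>k<n. f k j" "f n"] by simp
qed

lemma \<beta>_m: "\<beta> m j = 0"
  by (cases "j < m") (auto simp: \<beta>_low \<beta>_high)

lemma \<beta>_Suc: "\<tau> j * \<beta> i j = \<beta> (Suc i) j + \<tau> i * \<beta> i j"
proof -
  have "\<beta> (Suc i) j = \<beta> i j * (\<tau> j - \<tau> i)" by (simp add: \<beta>_def)
  then show ?thesis by (simp add: algebra_simps)
qed

lemma span_mult_\<tau>: "\<eta> \<in> span \<Longrightarrow> (\<lambda>j. \<tau> j * \<eta> j) \<in> span"
proof -
  assume "\<eta> \<in> span"
  then obtain a where a: "\<forall>i<m. a i \<in> T" "\<eta> = (\<lambda>j. \<Sum>i<m. a i * \<beta> i j)" unfolding span_def by blast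
  define a' where "a' i = (if i = 0 then 0 else a (i - 1))" for i
  have sh: "(\<Sum>i<m. a i * \<beta> (Suc i) j) = (\<Sum>i<m. a' i * \<beta> i j)" for j
  proof -
    have "(\<Sum>i<Suc m. a' i * \<beta> i j) = (\<Sum>i<m. a i * \<beta> (Suc i) j)"
      by (subst sum.lessThan_Suc_shift) (simp add: a'_def)
    moreover have "(\<Sum>i<Suc m. a' i * \<beta> i j) = (\<Sum>i<m. a' i * \<beta> i j)"
      by (simp add: \<beta>_m)
    ultimately show ?thesis by simp
  qed
  have "(\<lambda>j. \<tau> j * \<eta> j) = (\<lambda>j. \<Sum>i<m. (a' i + a i * \<tau> i) * \<beta> i j)"
  proof
    fix j
    have "\<tau> j * \<eta> j = (\<Sum>i<m. a i * (\<tau> j * \<beta> i j))"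
      unfolding a(2) by (simp add: sum_distrib_left algebra_simps)
    also have "\<dots> = (\<Sum>i<m. a i * \<beta> (Suc i) j) + (\<Sum>i<m. (a i * \<tau> i) * \<beta> i j)"
    proof -
      have "(\<Sum>i<m. a i * (\<tau> j * \<beta> i j)) = (\<Sum>i<m. a i * \<beta> (Suc i) j + (a i * \<tau> i) * \<beta> i j)"
      proof (rule sum.cong[OF refl])
        fix i
        have "a i * (\<tau> j * \<beta> i j) = a i * (\<beta> (Suc i) j + \<tau> i * \<beta> i j)"
          by (simp only: \<beta>_Suc[of j i])
        then show "a i * (\<tau> j * \<beta> i j) = a i * \<beta> (Suc i) j + (a i * \<tau> i) * \<beta> i j"
          by (simp add: distrib_left mult.assoc)
      qed
      then show ?thesis by (simp add: sum.distrib)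
    qed
    also have "\<dots> = (\<Sum>i<m. (a' i + a i * \<tau> i) * \<beta> i j)"
      unfolding sh by (simp add: sum.distrib algebra_simps)
    finally show "\<tau> j * \<eta> j = (\<Sum>i<m. (a' i + a i * \<tau> i) * \<beta> i j)" .
  qed
  moreover have "\<forall>i<m. a' i + a i * \<tau> i \<in> T"
    using a(1) \<tau>T by (auto simp: a'_def intro!: T_add T_mult)
  ultimately show ?thesis unfolding span_def by (intro CollectI exI[of _ "\<lambda>i. a' i + a i * \<tau> i"] conjI)
qed

lemma pow_in_span: "(\<lambda>j. if j < m then \<tau> j ^ l else 0) \<in> span"
proof (induction l)
  case 0
  have "(\<lambda>j. if j < m then \<tau> j ^ 0 else 0) = \<beta> 0" by (auto simp: \<beta>_def fun_eq_iff)
  moreover have "m > 0 \<Longrightarrow> \<beta> 0 \<in> span" using span_basis unfolding is_basis_def by blast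
  moreover have "m = 0 \<Longrightarrow> \<beta> 0 = (\<lambda>_. 0)" by (rule ext, rule \<beta>_high) simp
  ultimately show ?case using span_0 by (cases "m = 0") auto
next
  case (Suc l)
  have "(\<lambda>j. if j < m then \<tau> j ^ Suc l else 0) = (\<lambda>j. \<tau> j * (if j < m then \<tau> j ^ l else 0))"
    by auto
  then show ?case using span_mult_\<tau>[OF Suc.IH] by simp
qed

lemma span_freemod: "span \<subseteq> freemod T m"
proof
  fix \<eta> assume "\<eta> \<in> span"
  then obtain a where a: "\<forall>i<m. a i \<in> T" "\<eta> = (\<lambda>j. \<Sum>i<m. a i * \<beta> i j)" unfolding span_def by blast
  then show "\<eta> \<in> freemod T m"
    unfolding freemod_def using \<beta>_T \<beta>_high by (auto intro!: T_sum T_mult)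
qed

end


lemma ded_iff:
  fixes \<sigma> :: "nat \<Rightarrow> 'a::field \<Rightarrow> 'a"
  shows "\<eta> \<in> dedekind_image T m \<sigma> \<longleftrightarrow> (\<exists>(n::nat) x y. (\<forall>k<n. x k \<in> T \<and> y k \<in> T) \<and>
      \<eta> = (\<lambda>j. if j < m then (\<Sum>k<n. x k * \<sigma> j (y k)) else 0))"
proof -
  have e: "((\<forall>j<m. \<eta> j = f j) \<and> (\<forall>j\<ge>m. \<eta> j = 0)) \<longleftrightarrow> \<eta> = (\<lambda>j. if j < m then f j else 0)" for f
  proof
    assume "(\<forall>j<m. \<eta> j = f j) \<and> (\<forall>j\<ge>m. \<eta> j = 0)"
    then show "\<eta> = (\<lambda>j. if j < m then f j else 0)" by (intro ext) (simp add: not_less)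
  next
    assume "\<eta> = (\<lambda>j. if j < m then f j else 0)"
    then show "(\<forall>j<m. \<eta> j = f j) \<and> (\<forall>j\<ge>m. \<eta> j = 0)" by simp
  qed
  show ?thesis
    unfolding dedekind_image_def mem_Collect_eq
    by (simp only: conj_assoc[symmetric] e)
qed

lemma ded_add:
  assumes "\<eta>1 \<in> dedekind_image T m \<sigma>" "\<eta>2 \<in> dedekind_image T m \<sigma>"
  shows "(\<lambda>j. \<eta>1 j + \<eta>2 j) \<in> dedekind_image T m \<sigma>"
proof -
  obtain n1 :: nat and x1 y1 where 1: "\<forall>k<n1. x1 k \<in> T \<and> y1 k \<in> T"
    "\<eta>1 = (\<lambda>j. if j < m then (\<Sum>k<n1. x1 k * \<sigma> j (y1 k)) else 0)"
    using assms(1) unfolding ded_iff by blast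
  obtain n2 :: nat and x2 y2 where 2: "\<forall>k<n2. x2 k \<in> T \<and> y2 k \<in> T"
    "\<eta>2 = (\<lambda>j. if j < m then (\<Sum>k<n2. x2 k * \<sigma> j (y2 k)) else 0)"
    using assms(2) unfolding ded_iff by blast
  define x where "x k = (if k < n1 then x1 k else x2 (k - n1))" for k
  define y where "y k = (if k < n1 then y1 k else y2 (k - n1))" for k
  have "\<forall>k<n1 + n2. x k \<in> T \<and> y k \<in> T"
  proof (intro allI impI)
    fix k assume k: "k < n1 + n2"
    show "x k \<in> T \<and> y k \<in> T"
    proof (cases "k < n1")
      case True then show ?thesis using 1(1) by (simp add: x_def y_def)
    next
      case False then have "k - n1 < n2" using k by simp
      then show ?thesis using 2(1) False by (simp add: x_def y_def)
    qed
  qed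
  moreover have "(\<lambda>j. \<eta>1 j + \<eta>2 j) = (\<lambda>j. if j < m then (\<Sum>k<n1 + n2. x k * \<sigma> j (y k)) else 0)"
  proof
    fix j
    have "(\<Sum>k<n1 + n2. x k * \<sigma> j (y k)) = (\<Sum>k<n1. x1 k * \<sigma> j (y1 k)) + (\<Sum>k<n2. x2 k * \<sigma> j (y2 k))"
      unfolding sum_concat by (simp add: x_def y_def)
    then show "\<eta>1 j + \<eta>2 j = (if j < m then (\<Sum>k<n1 + n2. x k * \<sigma> j (y k)) else 0)"
      unfolding 1(2) 2(2) by simp
  qed
  ultimately show ?thesis unfolding ded_iff by (intro exI[of _ "n1 + n2"] exI[of _ x] exI[of _ y] conjI)
qed

lemma ded_0: "(\<lambda>_. 0) \<in> dedekind_image T m \<sigma>"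
  unfolding ded_iff by (intro exI[of _ "0::nat"] exI[of _ "\<lambda>_. 0"] conjI) (simp_all add: fun_eq_iff)

context pts
begin

lemma ded_smult:
  assumes "\<eta> \<in> dedekind_image T m \<sigma>" "c \<in> T"
  shows "(\<lambda>j. c * \<eta> j) \<in> dedekind_image T m \<sigma>"
proof -
  obtain n :: nat and x y where 1: "\<forall>k<n. x k \<in> T \<and> y k \<in> T"
    "\<eta> = (\<lambda>j. if j < m then (\<Sum>k<n. x k * \<sigma> j (y k)) else 0)"
    using assms(1) unfolding ded_iff by blast
  have "\<forall>k<n. c * x k \<in> T \<and> y k \<in> T" using 1(1) assms(2) by (auto intro!: T_mult)
  moreover have "(\<lambda>j. c * \<eta> j) = (\<lambda>j. if j < m then (\<Sum>k<n. (c * x k) * \<sigma> j (y k)) else 0)"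
    unfolding 1(2) by (auto simp: sum_distrib_left mult.assoc fun_eq_iff)
  ultimately show ?thesis unfolding ded_iff by (intro exI[of _ n] exI[of _ "\<lambda>k. c * x k"] exI[of _ y] conjI)
qed

lemma ded_sum:
  fixes n :: nat
  shows "(\<And>k. k < n \<Longrightarrow> f k \<in> dedekind_image T m \<sigma>) \<Longrightarrow> (\<lambda>j. \<Sum>k<n. f k j) \<in> dedekind_image T m \<sigma>"
proof (induction n)
  case 0 then show ?case using ded_0 by simp
next
  case (Suc n)
  then show ?case using ded_add[of "\<lambda>j. \<Sum>k<n. f k j" T m \<sigma> "f n"] by simp
qed

lemma dedekind_eq_span:
  fixes \<sigma> :: "nat \<Rightarrow> 'a \<Rightarrow> 'a" and S :: "'a set"
  assumes hom: "\<And>j x y. j < m \<Longrightarrow> \<sigma> j (x + y) = \<sigma> j x + \<sigma> j y \<and> \<sigma> j (x * y) = \<sigma> j x * \<sigma> j y"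
    and \<sigma>1: "\<And>j. j < m \<Longrightarrow> \<sigma> j 1 = 1"
    and \<sigma>S: "\<And>j c. j < m \<Longrightarrow> c \<in> S \<Longrightarrow> \<sigma> j c = c"
    and \<tau>eq: "\<And>j. \<tau> j = \<sigma> j \<theta>"
    and \<theta>T: "\<theta> \<in> T"
    and Tgen: "T = {x. \<exists>n c. (\<forall>i<n. c i \<in> S) \<and> x = (\<Sum>i<n. c i * \<theta> ^ i)}"
    and ST: "S \<subseteq> T"
  shows "dedekind_image T m \<sigma> = span"
proof -
  have \<sigma>0: "\<sigma> j 0 = 0" if "j < m" for j
    using hom[OF that, of 0 0, THEN conjunct1] by (metis add.right_neutral add_left_cancel)
  have \<sigma>sum: "\<sigma> j (\<Sum>i<n. f i) = (\<Sum>i<n. \<sigma> j (f i))" if "j < m" for j and n :: nat and f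
    by (induction n) (simp_all add: \<sigma>0[OF that] hom[OF that])
  have \<sigma>pow: "\<sigma> j (x ^ n) = (\<sigma> j x) ^ n" if "j < m" for j x n
    by (induction n) (simp_all add: \<sigma>1[OF that] hom[OF that])
  have gen: "(\<lambda>j. if j < m then x * \<sigma> j y else 0) \<in> span" if xy: "x \<in> T" "y \<in> T" for x y
  proof -
    obtain n :: nat and c where c: "\<forall>i<n. c i \<in> S" "y = (\<Sum>i<n. c i * \<theta> ^ i)"
      using xy(2) Tgen by blast
    have "(\<lambda>j. if j < m then x * \<sigma> j y else 0) = (\<lambda>j. \<Sum>i<n. (x * c i) * (if j < m then \<tau> j ^ i else 0))"
    proof
      fix j
      show "(if j < m then x * \<sigma> j y else 0) = (\<Sum>i<n. (x * c i) * (if j < m then \<tau> j ^ i else 0))"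
      proof (cases "j < m")
        case True
        have "\<sigma> j y = (\<Sum>i<n. c i * \<tau> j ^ i)"
          unfolding c(2) \<sigma>sum[OF True] using c(1) True
          by (intro sum.cong) (auto simp: hom \<sigma>S \<sigma>pow \<tau>eq)
        then show ?thesis using True by (simp add: sum_distrib_left mult.assoc)
      qed simp
    qed
    moreover have "(\<lambda>j. \<Sum>i<n. (x * c i) * (if j < m then \<tau> j ^ i else 0)) \<in> span"
    proof (rule span_sum)
      fix i assume "i < n"
      then have "x * c i \<in> T" using c(1) ST xy(1) by (auto intro!: T_mult)
      then show "(\<lambda>j. (x * c i) * (if j < m then \<tau> j ^ i else 0)) \<in> span"
        by (rule span_smult[OF pow_in_span])
    qed
    ultimately show ?thesis by simp
  qed
  have \<beta>ded: "\<beta> i \<in> dedekind_image T m \<sigma>" if "i < m" for i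
    using that
  proof (induction i)
    case 0
    have "\<beta> 0 = (\<lambda>j. if j < m then (\<Sum>k<(1::nat). (\<lambda>_. 1) k * \<sigma> j ((\<lambda>_. 1) k)) else 0)"
      by (auto simp: \<beta>_def \<sigma>1 fun_eq_iff)
    then show ?case unfolding ded_iff by (intro exI[of _ "1::nat"] exI[of _ "\<lambda>_. 1"] conjI) auto
  next
    case (Suc i)
    then have i: "i < m" by simp
    have IH: "\<beta> i \<in> dedekind_image T m \<sigma>" using Suc.IH i by simp
    have A: "(\<lambda>j. \<tau> j * \<beta> i j) \<in> dedekind_image T m \<sigma>"
    proof -
      obtain n :: nat and x y where 1: "\<forall>k<n. x k \<in> T \<and> y k \<in> T"
        "\<beta> i = (\<lambda>j. if j < m then (\<Sum>k<n. x k * \<sigma> j (y k)) else 0)"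
        using IH unfolding ded_iff by blast
      have "\<forall>k<n. x k \<in> T \<and> \<theta> * y k \<in> T" using 1(1) \<theta>T by (auto intro!: T_mult)
      moreover have "(\<lambda>j. \<tau> j * \<beta> i j) = (\<lambda>j. if j < m then (\<Sum>k<n. x k * \<sigma> j (\<theta> * y k)) else 0)"
      proof
        fix j show "\<tau> j * \<beta> i j = (if j < m then (\<Sum>k<n. x k * \<sigma> j (\<theta> * y k)) else 0)"
          by (cases "j < m") (auto simp: 1(2) hom \<tau>eq sum_distrib_left algebra_simps)
      qed
      ultimately show ?thesis unfolding ded_iff by (intro exI[of _ n] exI[of _ x] exI[of _ "\<lambda>k. \<theta> * y k"] conjI)
    qed
    have B: "(\<lambda>j. (- \<tau> i) * \<beta> i j) \<in> dedekind_image T m \<sigma>"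
      by (rule ded_smult[OF IH]) (rule T_uminus[OF \<tau>T[OF i]])
    have "\<beta> (Suc i) = (\<lambda>j. \<tau> j * \<beta> i j + (- \<tau> i) * \<beta> i j)"
    proof
      fix j show "\<beta> (Suc i) j = \<tau> j * \<beta> i j + (- \<tau> i) * \<beta> i j"
        using \<beta>_Suc[of j i] by simp
    qed
    then show ?case using ded_add[OF A B] by simp
  qed
  show ?thesis
  proof
    show "dedekind_image T m \<sigma> \<subseteq> span"
    proof
      fix \<eta> assume "\<eta> \<in> dedekind_image T m \<sigma>"
      then obtain n :: nat and x y where 1: "\<forall>k<n. x k \<in> T \<and> y k \<in> T"
        "\<eta> = (\<lambda>j. if j < m then (\<Sum>k<n. x k * \<sigma> j (y k)) else 0)"
        unfolding ded_iff by blast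
      have "\<eta> = (\<lambda>j. \<Sum>k<n. (if j < m then x k * \<sigma> j (y k) else 0))"
        unfolding 1(2) by (auto simp: fun_eq_iff)
      also have "\<dots> \<in> span"
        by (rule span_sum) (use 1(1) gen in auto)
      finally show "\<eta> \<in> span" .
    qed
  next
    show "span \<subseteq> dedekind_image T m \<sigma>"
    proof
      fix \<eta> assume "\<eta> \<in> span"
      then obtain a where a: "\<forall>i<m. a i \<in> T" "\<eta> = (\<lambda>j. \<Sum>i<m. a i * \<beta> i j)"
        unfolding span_def by blast
      have "(\<lambda>j. \<Sum>i<m. a i * \<beta> i j) \<in> dedekind_image T m \<sigma>"
        by (rule ded_sum) (use a(1) \<beta>ded ded_smult in auto)
      then show "\<eta> \<in> dedekind_image T m \<sigma>" using a(2) by simp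
    qed
  qed
qed

end


theorem proposition1p14:
  fixes S T K :: "'a::field set" and G :: "('a \<Rightarrow> 'a) set"
    and t \<theta> :: 'a and m :: nat and \<sigma> :: "nat \<Rightarrow> 'a \<Rightarrow> 'a"
  assumes dvrT: "is_dvr UNIV T"
    and dvrS: "is_dvr K S"
    and ST: "S \<subseteq> T"
    and gal: "galois_with_group G K"
    and m_def: "m = card G"
    and G_T: "\<forall>\<rho>\<in>G. \<rho> ` T \<subseteq> T"
    and t_gen: "t \<in> T" "{t * y | y. y \<in> T} = T - units_of_ring T"
    and theta: "\<theta> \<in> T" "T = {x. \<exists>n c. (\<forall>i<n. c i \<in> S) \<and> x = (\<Sum>i<n. c i * \<theta> ^ i)}"
    and enum: "bij_betw \<sigma> {..<m} G" "\<sigma> 0 = id"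
    and minord: "minimally_ordered T t m (\<lambda>j. \<sigma> j \<theta>)"
  shows
    "(\<forall>e. elem_div_vals T t m (dedekind_image T m \<sigma>) e \<longrightarrow>
          (\<forall>i<m. e i = (\<Sum>j<i. vt T t (\<sigma> i \<theta> - \<sigma> j \<theta>)))) \<and>
     elem_div_vals T t m (dedekind_image T m \<sigma>) (\<lambda>i. \<Sum>j<i. vt T t (\<sigma> i \<theta> - \<sigma> j \<theta>))
   \<and> dedekind_image T m \<sigma> =
       {\<eta> \<in> freemod T m. \<forall>i<m. \<exists>y\<in>T.
          \<eta> i - (\<Sum>j<i. \<eta> j * lagrange_coeff (\<lambda>k. \<sigma> k \<theta>) j i)
            = t ^ (\<Sum>j<i. vt T t (\<sigma> i \<theta> - \<sigma> j \<theta>)) * y}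
   \<and> is_basis T m (dedekind_image T m \<sigma>)
       (\<lambda>i j. if j < m then (\<Prod>k<i. \<sigma> j \<theta> - \<sigma> k \<theta>) else 0)"
proof -
  obtain v where dv: "discrete_valuation UNIV v" and Teq: "T = {x. x = 0 \<or> 0 \<le> v x}"
    using dvrT unfolding is_dvr_def by auto
  have vmult: "\<And>x y. x \<noteq> 0 \<Longrightarrow> y \<noteq> 0 \<Longrightarrow> v (x * y) = v x + v y"
    using dv unfolding discrete_valuation_def by blast
  have ultra: "\<And>x y. x \<noteq> 0 \<Longrightarrow> y \<noteq> 0 \<Longrightarrow> x + y \<noteq> 0 \<Longrightarrow> min (v x) (v y) \<le> v (x + y)"
    using dv unfolding discrete_valuation_def by blast
  obtain x0 where x0: "x0 \<noteq> 0" "v x0 = 1"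
    using dv unfolding discrete_valuation_def by blast
  have v1: "v 1 = 0" using vmult[of 1 1] by simp
  have unitv: "x \<noteq> 0 \<and> v x = 0" if xu: "x \<in> units_of_ring T" for x
  proof -
    obtain y where y: "x \<in> T" "y \<in> T" "x * y = 1" using xu unfolding units_of_ring_def by blast
    then have nz: "x \<noteq> 0" "y \<noteq> 0" by auto
    then have "v x + v y = 0" using vmult[OF nz] y(3) v1 by simp
    moreover have "0 \<le> v x" "0 \<le> v y" using y nz Teq by auto
    ultimately show ?thesis using nz by simp
  qed
  have x0T: "x0 \<in> T" using x0 Teq by auto
  have "x0 \<notin> units_of_ring T" using unitv x0 by force
  then have "x0 \<in> {t * y | y. y \<in> T}" using t_gen(2) x0T by blast
  then obtain y0 where y0: "y0 \<in> T" "x0 = t * y0" by blast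
  have tnz: "t \<noteq> 0" using y0 x0 by auto
  have y0nz: "y0 \<noteq> 0" using y0 x0 by auto
  have vt0: "0 \<le> v t" using t_gen(1) tnz Teq by auto
  have vy0: "0 \<le> v y0" using y0 y0nz Teq by auto
  have "v t + v y0 = 1" using vmult[OF tnz y0nz] y0(2) x0 by simp
  then have vtle: "v t \<le> 1" using vy0 by simp
  have "t \<in> {t * y | y. y \<in> T}" by (rule CollectI, rule exI[of _ 1]) (simp add: Teq v1)
  then have tnu: "t \<notin> units_of_ring T" using t_gen(2) by blast
  have "v t \<noteq> 0"
  proof
    assume "v t = 0"
    have "v (t * inverse t) = v t + v (inverse t)" using tnz by (intro vmult) auto
    then have "v (inverse t) = 0" using tnz \<open>v t = 0\<close> v1 by simp
    then have "inverse t \<in> T" using Teq by auto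
    then have "t \<in> units_of_ring T" using t_gen(1) tnz unfolding units_of_ring_def by force
    then show False using tnu by simp
  qed
  then have vt1: "v t = 1" using vt0 vtle by simp
  interpret D: dvr T t v
    by unfold_locales (use vmult ultra Teq tnz vt1 in auto)
  have \<sigma>G: "\<sigma> j \<in> G" if "j < m" for j using enum(1) that by (auto dest: bij_betw_apply)
  have aut: "field_automorphism (\<sigma> j)" if "j < m" for j using gal \<sigma>G[OF that] unfolding galois_with_group_def by blast
  have hom: "\<sigma> j (x + y) = \<sigma> j x + \<sigma> j y \<and> \<sigma> j (x * y) = \<sigma> j x * \<sigma> j y" if "j < m" for j x y
    using aut[OF that] unfolding field_automorphism_def by blast
  have \<sigma>1: "\<sigma> j 1 = 1" if "j < m" for j
  proof -
    have "bij (\<sigma> j)" using aut[OF that] unfolding field_automorphism_def by blast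
    then obtain z where z: "\<sigma> j z = 1" by (metis bij_pointE)
    have "\<sigma> j (1 * z) = \<sigma> j 1 * \<sigma> j z" using hom[OF that] by blast
    then show ?thesis using z by simp
  qed
  have SK: "S \<subseteq> K" using dvrS unfolding is_dvr_def by auto
  have \<sigma>S: "\<sigma> j c = c" if "j < m" "c \<in> S" for j c
  proof -
    have "c \<in> {x. \<forall>\<sigma>\<in>G. \<sigma> x = x}" using SK that(2) gal unfolding galois_with_group_def by auto
    then show ?thesis using \<sigma>G[OF that(1)] by auto
  qed
  have \<tau>T: "\<sigma> j \<theta> \<in> T" if "j < m" for j using G_T \<sigma>G[OF that] theta(1) by auto
  have \<tau>inj: "\<sigma> i \<theta> \<noteq> \<sigma> j \<theta>" if "i < m" "j < m" "i \<noteq> j" for i j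
    using minord that unfolding minimally_ordered_def by blast
  interpret P: pts T t v m "\<lambda>j. \<sigma> j \<theta>"
    by unfold_locales (use \<tau>T \<tau>inj in auto)
  have mo: P.minord unfolding P.minord_def using minord unfolding minimally_ordered_def by blast
  have \<phi>eq: "(\<lambda>i. \<Sum>j<i. vt T t (\<sigma> i \<theta> - \<sigma> j \<theta>)) = P.\<phi>"
    by (simp add: P.\<phi>_def fun_eq_iff)
  have ded: "dedekind_image T m \<sigma> = P.span"
    by (rule P.dedekind_eq_span[OF hom \<sigma>1 \<sigma>S _ theta(1) theta(2) ST]) auto
  have \<beta>eq: "(\<lambda>i j. if j < m then (\<Prod>k<i. \<sigma> j \<theta> - \<sigma> k \<theta>) else 0) = P.\<beta>"
    by (simp add: P.\<beta>_def fun_eq_iff)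
  have ex: "elem_div_vals T t m P.span P.\<phi>" by (rule P.exist_ed[OF mo])
  have c1: "\<forall>e. elem_div_vals T t m (dedekind_image T m \<sigma>) e \<longrightarrow>
          (\<forall>i<m. e i = (\<Sum>j<i. vt T t (\<sigma> i \<theta> - \<sigma> j \<theta>)))"
  proof (rule allI, rule impI)
    fix e assume "elem_div_vals T t m (dedekind_image T m \<sigma>) e"
    then have "\<forall>i<m. e i = P.\<phi> i"
      using D.elem_div_unique[OF _ ex P.span_0] ded by simp
    then show "\<forall>i<m. e i = (\<Sum>j<i. vt T t (\<sigma> i \<theta> - \<sigma> j \<theta>))"
      using \<phi>eq by (simp add: fun_eq_iff)
  qed
  have c2: "elem_div_vals T t m (dedekind_image T m \<sigma>) (\<lambda>i. \<Sum>j<i. vt T t (\<sigma> i \<theta> - \<sigma> j \<theta>))"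
    using ex ded \<phi>eq by simp
  have c3: "dedekind_image T m \<sigma> =
       {\<eta> \<in> freemod T m. \<forall>i<m. \<exists>y\<in>T.
          \<eta> i - (\<Sum>j<i. \<eta> j * lagrange_coeff (\<lambda>k. \<sigma> k \<theta>) j i)
            = t ^ (\<Sum>j<i. vt T t (\<sigma> i \<theta> - \<sigma> j \<theta>)) * y}"
  proof -
    have "(\<Sum>j<i. vt T t (\<sigma> i \<theta> - \<sigma> j \<theta>)) = P.\<phi> i" for i by (simp add: P.\<phi>_def)
    then have "{\<eta> \<in> freemod T m. \<forall>i<m. \<exists>y\<in>T.
          \<eta> i - (\<Sum>j<i. \<eta> j * lagrange_coeff (\<lambda>k. \<sigma> k \<theta>) j i)
            = t ^ (\<Sum>j<i. vt T t (\<sigma> i \<theta> - \<sigma> j \<theta>)) * y} =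
      {\<eta> \<in> freemod T m. \<forall>i<m. \<exists>y\<in>T. \<eta> i - (\<Sum>j<i. \<eta> j * lagrange_coeff (\<lambda>k. \<sigma> k \<theta>) j i) = t ^ P.\<phi> i * y}"
      by simp
    also have "\<dots> = P.span"
      using P.charac P.span_freemod by blast
    finally show ?thesis using ded by simp
  qed
  have c4: "is_basis T m (dedekind_image T m \<sigma>) (\<lambda>i j. if j < m then (\<Prod>k<i. \<sigma> j \<theta> - \<sigma> k \<theta>) else 0)"
    using P.span_basis ded \<beta>eq by simp
  show ?thesis using c1 c2 c3 c4 by blast
qed


end
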